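(* In the shallow setting of the context, assume there exists $M>0$ such that $$\max_{h=1,\ldots,n_2}\Big|\sigma^{(s_h)}\Big(b+\sum_{r=1}^{n_0}w_rx_{\alpha,r}\Big)w_1^{s_h}\Big|\le M\Big(1+\Big|b+\sum_{r=1}^{n_0}w_rx_{\alpha,r}\Big|\Big)$$ for every $\alpha\in A$ and every $b,w_1,\ldots,w_{n_0}\in\mathbb{R}$. Then $\Upsilon(\cdot;\underline{x})$ is finite in a neighborhood of the origin of $\mathbb{R}^{|A|\times n_2}$.
   Context: Fix integers $n_0,n_2\ge1$, constants $C_b\ge0$, $C_W>0$, a function $\sigma:\mathbb{R}\to\mathbb{R}$, a finite set $A$ and inputs $x_\alpha=(x_{\alpha,1},\ldots,x_{\alpha,n_0})\in\mathbb{R}^{n_0}$, $\alpha\in A$ ($\underline{x}=\{x_\alpha\}$). Fix $s_1,\ldots,s_{n_2}\in\{0,1\}$; unless all $s_h=0$, $\sigma$ is assumed almost everywhere differentiable with a.e. derivative $\sigma^{(1)}=\sigma'$; $\sigma^{(0)}=\sigma$. Let $b^{(1)}_1$ be centered Normal with variance $C_b$, $W^{(1)}_{1r}$ ($r=1,\ldots,n_0$) centered Normal with variance $C_W/n_0$, and $\widehat W^{(2)}_{h1}$ ($h=1,\ldots,n_2$) standard Normal, all independent. Set $F_{h1}(x):=\sqrt{C_W}\widehat W^{(2)}_{h1}\sigma^{(s_h)}(b^{(1)}_1+\sum_{r=1}^{n_0}W^{(1)}_{1r}x_r)(W^{(1)}_{11})^{s_h}$ and, for $\theta\in\mathbb{R}^{|A|\times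 n_2}$, $\Upsilon(\theta;\underline{x}):=\log\mathbb{E}[\exp(\sum_{\alpha\in A}\sum_{h=1}^{n_2}\theta_{\alpha h}F_{h1}(x_\alpha))]$, which equals $\log\mathbb{E}[\exp(\frac{C_W}{2}\sum_{h=1}^{n_2}(\sum_{\alpha\in A}\theta_{\alpha h}\sigma^{(s_h)}(b^{(1)}_1+\sum_rW^{(1)}_{1r}x_{\alpha,r})(W^{(1)}_{11})^{s_h})^2)]$. *)

theory Defs
  imports "HOL-Probability.Probability"
begin

definition gauss :: "real measure" where
  "gauss = density lborel (\<lambda>t. ennreal (std_normal_density t))"

text \<open>Sample space of the shallow network: a point (z, u, v) encodes
  b^(1)_1 = sqrt C_b * z, W^(1)_{1r} = sqrt (C_W / n0) * u r (r = 1..n0),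
  hat W^(2)_{h1} = v h (h = 1..n2); all coordinates i.i.d. standard Gaussian.\<close>
definition shallow_space :: "nat \<Rightarrow> nat \<Rightarrow> (real \<times> (nat \<Rightarrow> real) \<times> (nat \<Rightarrow> real)) measure" where
  "shallow_space n0 n2 = gauss \<Otimes>\<^sub>M ((PiM {1..n0} (\<lambda>_. gauss)) \<Otimes>\<^sub>M (PiM {1..n2} (\<lambda>_. gauss)))"

definition sigma_s :: "(real \<Rightarrow> real) \<Rightarrow> (real \<Rightarrow> real) \<Rightarrow> nat \<Rightarrow> real \<Rightarrow> real" where
  "sigma_s \<sigma> \<sigma>' k t = (if k = 0 then \<sigma> t else \<sigma>' t)"

definition shallow_F ::
  "nat \<Rightarrow> real \<Rightarrow> real \<Rightarrow> (real \<Rightarrow> real) \<Rightarrow> (real \<Rightarrow> real) \<Rightarrow> (nat \<Rightarrow> nat)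
   \<Rightarrow> nat \<Rightarrow> (nat \<Rightarrow> real) \<Rightarrow> real \<times> (nat \<Rightarrow> real) \<times> (nat \<Rightarrow> real) \<Rightarrow> real" where
  "shallow_F n0 Cb CW \<sigma> \<sigma>' s h x \<omega> =
     (case \<omega> of (z, u, v) \<Rightarrow>
       (let b = sqrt Cb * z; W = (\<lambda>r. sqrt (CW / real n0) * u r) in
        sqrt CW * v h * sigma_s \<sigma> \<sigma>' (s h) (b + (\<Sum>r=1..n0. W r * x r)) * (W 1) ^ (s h)))"

end

theory Submission
  imports Defs
begin

lemma gauss_prob: "prob_space gauss"
  unfolding gauss_def by (rule prob_space_normal_density) simp

lemma gauss_exp_sq: "(\<integral>\<^sup>+t. ennreal (exp (t\<^sup>2/4)) \<partial>gauss) < \<infinity>"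
proof -
  have "(\<integral>\<^sup>+t. ennreal (exp (t\<^sup>2/4)) \<partial>gauss) =
        (\<integral>\<^sup>+t. ennreal (std_normal_density t) * ennreal (exp (t\<^sup>2/4)) \<partial>lborel)"
    unfolding gauss_def by (subst nn_integral_density) auto
  also have "\<dots> = (\<integral>\<^sup>+t. ennreal (sqrt 2) * ennreal (normal_density 0 (sqrt 2) t) \<partial>lborel)"
  proof (intro nn_integral_cong)
    fix t :: real
    have "std_normal_density t * exp (t\<^sup>2/4) = sqrt 2 * normal_density 0 (sqrt 2) t"
    proof -
      have e: "exp (- t\<^sup>2 / 2) * exp (t\<^sup>2/4) = exp (- t\<^sup>2 / (2 * (sqrt 2)\<^sup>2))"
        by (simp add: exp_add[symmetric])
      have s: "sqrt (2 * pi * (sqrt 2)\<^sup>2) = sqrt 2 * sqrt (2*pi)"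
        by (simp add: real_sqrt_mult[symmetric])
      show ?thesis unfolding std_normal_density_def normal_density_def
        using e s by (simp add: field_simps)
    qed
    then show "ennreal (std_normal_density t) * ennreal (exp (t\<^sup>2/4)) =
        ennreal (sqrt 2) * ennreal (normal_density 0 (sqrt 2) t)"
      by (simp add: ennreal_mult[symmetric])
  qed
  also have "\<dots> = ennreal (sqrt 2) * (\<integral>\<^sup>+t. ennreal (normal_density 0 (sqrt 2) t) \<partial>lborel)"
    by (rule nn_integral_cmult) auto
  also have "(\<integral>\<^sup>+t. ennreal (normal_density 0 (sqrt 2) t) \<partial>lborel) = 1"
  proof -
    interpret P: prob_space "density lborel (\<lambda>t. ennreal (normal_density 0 (sqrt 2) t))"
      by (rule prob_space_normal_density) simp
    show ?thesis using P.emeasure_space_1 by (simp add: emeasure_density)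
  qed
  finally show ?thesis by (simp add: ennreal_mult_less_top)
qed

lemma nn_integral_pair_mult:
  assumes "sigma_finite_measure M1" "sigma_finite_measure M2"
    and [measurable]: "f \<in> borel_measurable M1" "g \<in> borel_measurable M2"
  shows "(\<integral>\<^sup>+p. f (fst p) * g (snd p) \<partial>(M1 \<Otimes>\<^sub>M M2)) = integral\<^sup>N M1 f * integral\<^sup>N M2 g"
proof -
  interpret pair_sigma_finite M1 M2 using assms by (simp add: pair_sigma_finite_def)
  have "(\<integral>\<^sup>+p. f (fst p) * g (snd p) \<partial>(M1 \<Otimes>\<^sub>M M2)) = (\<integral>\<^sup>+x. \<integral>\<^sup>+y. f x * g y \<partial>M2 \<partial>M1)"
    by (subst M2.nn_integral_fst[symmetric]) auto
  also have "\<dots> = (\<integral>\<^sup>+x. f x * integral\<^sup>N M2 g \<partial>M1)"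
    by (simp add: nn_integral_cmult)
  also have "\<dots> = integral\<^sup>N M1 f * integral\<^sup>N M2 g"
    by (simp add: nn_integral_multc)
  finally show ?thesis .
qed

lemma PiM_gauss_exp:
  assumes "finite I"
  shows "(\<integral>\<^sup>+u. (\<Prod>i\<in>I. ennreal (exp ((u i)\<^sup>2/4))) \<partial>PiM I (\<lambda>_. gauss)) < \<infinity>"
proof -
  interpret product_prob_space "\<lambda>_. gauss"
    by (simp add: product_prob_space_def product_prob_space_axioms_def product_sigma_finite_def gauss_prob prob_space_imp_sigma_finite)
  have "(\<integral>\<^sup>+u. (\<Prod>i\<in>I. ennreal (exp ((u i)\<^sup>2/4))) \<partial>PiM I (\<lambda>_. gauss))
     = (\<Prod>i\<in>I. (\<integral>\<^sup>+t. ennreal (exp (t\<^sup>2/4)) \<partial>gauss))"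
    by (rule product_nn_integral_prod[OF assms, where f="\<lambda>_ t. ennreal (exp (t\<^sup>2/4))"]) (simp add: gauss_def)
  also have "\<dots> < \<infinity>" using gauss_exp_sq
    by (simp add: less_top[symmetric] power_eq_top_ennreal ennreal_prod_eq_top) 
  finally show ?thesis .
qed


theorem proposition5p3:
  fixes n0 n2 :: nat and Cb CW M :: real and \<sigma> \<sigma>' :: "real \<Rightarrow> real"
    and A :: "'a set" and x :: "'a \<Rightarrow> nat \<Rightarrow> real" and s :: "nat \<Rightarrow> nat"
  assumes "n0 \<ge> 1" and "n2 \<ge> 1" and "Cb \<ge> 0" and "CW > 0"
    and "finite A"
    and "\<forall>h\<in>{1..n2}. s h \<in> {0, 1}"
    and "\<sigma> \<in> borel_measurable borel" and "\<sigma>' \<in> borel_measurable borel"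
    and "(\<exists>h\<in>{1..n2}. s h = 1) \<Longrightarrow> AE t in lborel. (\<sigma> has_real_derivative \<sigma>' t) (at t)"
    and "M > 0"
    and "\<forall>\<alpha>\<in>A. \<forall>b (w :: nat \<Rightarrow> real). \<forall>h\<in>{1..n2}.
           \<bar>sigma_s \<sigma> \<sigma>' (s h) (b + (\<Sum>r=1..n0. w r * x \<alpha> r)) * (w 1) ^ (s h)\<bar>
             \<le> M * (1 + \<bar>b + (\<Sum>r=1..n0. w r * x \<alpha> r)\<bar>)"
  shows "\<exists>\<epsilon>>0. \<forall>\<theta> :: 'a \<Rightarrow> nat \<Rightarrow> real.
           (\<forall>\<alpha>\<in>A. \<forall>h\<in>{1..n2}. \<bar>\<theta> \<alpha> h\<bar> < \<epsilon>) \<longrightarrow>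
           (\<integral>\<^sup>+ \<omega>. ennreal (exp (\<Sum>\<alpha>\<in>A. \<Sum>h=1..n2.
               \<theta> \<alpha> h * shallow_F n0 Cb CW \<sigma> \<sigma>' s h (x \<alpha>) \<omega>)) \<partial>shallow_space n0 n2) < \<infinity>"
proof -
  note hyp = assms(11)
  define X where "X = (\<Sum>\<alpha>\<in>A. \<Sum>r=1..n0. \<bar>x \<alpha> r\<bar>)"
  define B where "B = sqrt Cb + sqrt (CW / real n0) * X"
  define D where "D = 1 + real n0 + real n2"
  define K where "K = real (card A) * real n2 * (sqrt CW * M * (1 + B)) * 4 * D"
  define \<epsilon> where "\<epsilon> = 1 / (4 * (K + 1))"
  have X0: "X \<ge> 0" unfolding X_def by (intro sum_nonneg) auto
  have B0: "B \<ge> 0" unfolding B_def using X0 assms(3,4) by simp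
  have K0: "K \<ge> 0" unfolding K_def D_def using B0 assms(4,10) by simp
  have e0: "\<epsilon> > 0" unfolding \<epsilon>_def using K0 by simp
  have eK: "\<epsilon> * K \<le> 1/4" unfolding \<epsilon>_def using K0 by (simp add: field_simps)
  have pw: "exp (\<Sum>\<alpha>\<in>A. \<Sum>h=1..n2. \<theta> \<alpha> h * shallow_F n0 Cb CW \<sigma> \<sigma>' s h (x \<alpha>) (z, u, v))
     \<le> exp ((1 + z\<^sup>2 + (\<Sum>r=1..n0. (u r)\<^sup>2) + (\<Sum>h=1..n2. (v h)\<^sup>2)) / 4)"
    if th: "\<forall>\<alpha>\<in>A. \<forall>h\<in>{1..n2}. \<bar>\<theta> \<alpha> h\<bar> < \<epsilon>" for \<theta> z u v
  proof -
    define N where "N = 1 + \<bar>z\<bar> + (\<Sum>r=1..n0. \<bar>u r\<bar>) + (\<Sum>h=1..n2. \<bar>v h\<bar>)"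
    define R1 where "R1 = 1 + z\<^sup>2 + (\<Sum>r=1..n0. (u r)\<^sup>2) + (\<Sum>h=1..n2. (v h)\<^sup>2)"
    define L where "L = (\<lambda>\<alpha>. sqrt Cb * z + (\<Sum>r=1..n0. (sqrt (CW / real n0) * u r) * x \<alpha> r))"
    define G where "G = (\<lambda>\<alpha> h. sigma_s \<sigma> \<sigma>' (s h) (L \<alpha>) * (sqrt (CW / real n0) * u 1) ^ (s h))"
    have su0: "(\<Sum>r=1..n0. \<bar>u r\<bar>) \<ge> 0" by (intro sum_nonneg) auto
    have sv0: "(\<Sum>h=1..n2. \<bar>v h\<bar>) \<ge> 0" by (intro sum_nonneg) auto
    have N1: "N \<ge> 1" unfolding N_def using su0 sv0 by simp
    have F: "shallow_F n0 Cb CW \<sigma> \<sigma>' s h (x \<alpha>) (z, u, v) = sqrt CW * v h * G \<alpha> h" for \<alpha> h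
      unfolding shallow_F_def G_def L_def by (simp add: Let_def)
    have Gb: "\<bar>G \<alpha> h\<bar> \<le> M * (1 + \<bar>L \<alpha>\<bar>)" if "\<alpha> \<in> A" "h \<in> {1..n2}" for \<alpha> h
      using hyp that unfolding G_def L_def
      by (elim ballE allE[where x="sqrt Cb * z"] allE[where x="\<lambda>r. sqrt (CW / real n0) * u r"]) auto
    have Lb: "\<bar>L \<alpha>\<bar> \<le> B * N" if "\<alpha> \<in> A" for \<alpha>
    proof -
      have xr: "\<bar>x \<alpha> r\<bar> \<le> X" if "r \<in> {1..n0}" for r
      proof -
        have "\<bar>x \<alpha> r\<bar> \<le> (\<Sum>r=1..n0. \<bar>x \<alpha> r\<bar>)" by (rule member_le_sum) (use that in auto)
        also have "\<dots> \<le> X" unfolding X_def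
          by (rule member_le_sum[of _ _ "\<lambda>\<alpha>. \<Sum>r=1..n0. \<bar>x \<alpha> r\<bar>"]) (use \<open>\<alpha>\<in>A\<close> assms(5) in \<open>auto intro: sum_nonneg\<close>)
        finally show ?thesis .
      qed
      have sa: "\<bar>\<Sum>r=1..n0. (sqrt (CW / real n0) * u r) * x \<alpha> r\<bar> \<le> (\<Sum>r=1..n0. \<bar>(sqrt (CW / real n0) * u r) * x \<alpha> r\<bar>)"
        by (rule sum_abs)
      have "\<bar>L \<alpha>\<bar> \<le> sqrt Cb * \<bar>z\<bar> + (\<Sum>r=1..n0. \<bar>(sqrt (CW / real n0) * u r) * x \<alpha> r\<bar>)"
        unfolding L_def using sa assms(3) abs_triangle_ineq[of "sqrt Cb * z" "\<Sum>r=1..n0. (sqrt (CW / real n0) * u r) * x \<alpha> r"]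
        by (simp add: abs_mult del: sum_abs)
      also have "(\<Sum>r=1..n0. \<bar>(sqrt (CW / real n0) * u r) * x \<alpha> r\<bar>) \<le> (\<Sum>r=1..n0. sqrt (CW / real n0) * X * \<bar>u r\<bar>)"
      proof (intro sum_mono)
        fix r assume r: "r \<in> {1..n0}"
        have c0: "sqrt (CW / real n0) \<ge> 0" using assms(4) by simp
        have "\<bar>u r\<bar> * \<bar>x \<alpha> r\<bar> \<le> \<bar>u r\<bar> * X" using xr[OF r] by (simp add: mult_left_mono)
        then have "sqrt (CW / real n0) * (\<bar>u r\<bar> * \<bar>x \<alpha> r\<bar>) \<le> sqrt (CW / real n0) * (\<bar>u r\<bar> * X)"
          using c0 xr[OF r] by (intro mult_left_mono) auto
        then show "\<bar>(sqrt (CW / real n0) * u r) * x \<alpha> r\<bar> \<le> sqrt (CW / real n0) * X * \<bar>u r\<bar>"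
          using c0 by (simp add: abs_mult algebra_simps)
      qed
      also have "\<dots> = sqrt (CW / real n0) * X * (\<Sum>r=1..n0. \<bar>u r\<bar>)" by (simp add: sum_distrib_left)
      also have "sqrt Cb * \<bar>z\<bar> + sqrt (CW / real n0) * X * (\<Sum>r=1..n0. \<bar>u r\<bar>) \<le> sqrt Cb * N + sqrt (CW / real n0) * X * N"
        using su0 sv0 X0 assms(3,4) unfolding N_def
        by (intro add_mono mult_left_mono) auto
      also have "\<dots> = B * N" unfolding B_def by (simp add: algebra_simps)
      finally show ?thesis by simp
    qed
    have vb: "\<bar>v h\<bar> \<le> N" if "h \<in> {1..n2}" for h
    proof -
      have "\<bar>v h\<bar> \<le> (\<Sum>h=1..n2. \<bar>v h\<bar>)" by (rule member_le_sum) (use that in auto)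
      then show ?thesis unfolding N_def using su0 abs_ge_zero[of z] by linarith
    qed
    have termb: "\<theta> \<alpha> h * shallow_F n0 Cb CW \<sigma> \<sigma>' s h (x \<alpha>) (z, u, v) \<le> \<epsilon> * (sqrt CW * M * (1 + B)) * N\<^sup>2"
      if "\<alpha> \<in> A" "h \<in> {1..n2}" for \<alpha> h
    proof -
      have "\<theta> \<alpha> h * shallow_F n0 Cb CW \<sigma> \<sigma>' s h (x \<alpha>) (z, u, v) \<le> \<bar>\<theta> \<alpha> h\<bar> * (sqrt CW * (\<bar>v h\<bar> * \<bar>G \<alpha> h\<bar>))"
      proof -
        have "\<theta> \<alpha> h * (sqrt CW * v h * G \<alpha> h) \<le> \<bar>\<theta> \<alpha> h * (sqrt CW * v h * G \<alpha> h)\<bar>" by (rule abs_ge_self)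
        also have "\<dots> = \<bar>\<theta> \<alpha> h\<bar> * (sqrt CW * (\<bar>v h\<bar> * \<bar>G \<alpha> h\<bar>))" using assms(4) by (simp add: abs_mult)
        finally show ?thesis unfolding F .
      qed
      also have "\<dots> \<le> \<epsilon> * (sqrt CW * (N * (M * (1 + B * N))))"
      proof -
        have t1: "\<bar>\<theta> \<alpha> h\<bar> \<le> \<epsilon>" using th that by fastforce
        have "M * (1 + \<bar>L \<alpha>\<bar>) \<le> M * (1 + B * N)" using Lb[OF that(1)] assms(10) by simp
        then have g1: "\<bar>G \<alpha> h\<bar> \<le> M * (1 + B * N)" using Gb[OF that] by linarith
        have "\<bar>v h\<bar> * \<bar>G \<alpha> h\<bar> \<le> N * (M * (1 + B * N))"
          using vb[OF that(2)] g1 by (intro mult_mono) auto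
        then have s1: "sqrt CW * (\<bar>v h\<bar> * \<bar>G \<alpha> h\<bar>) \<le> sqrt CW * (N * (M * (1 + B * N)))"
          using assms(4) by (simp add: mult_left_mono)
        show ?thesis using t1 e0 assms(4) mult_mono[OF t1 s1] by simp
      qed
      also have "\<dots> \<le> \<epsilon> * (sqrt CW * (N * (M * ((1 + B) * N))))"
        using e0 assms(4,10) N1 B0 by (intro mult_left_mono) (auto simp: algebra_simps)
      also have "\<dots> = \<epsilon> * (sqrt CW * M * (1 + B)) * N\<^sup>2" by (simp add: power2_eq_square algebra_simps)
      finally show ?thesis .
    qed
    have "(\<Sum>\<alpha>\<in>A. \<Sum>h=1..n2. \<theta> \<alpha> h * shallow_F n0 Cb CW \<sigma> \<sigma>' s h (x \<alpha>) (z, u, v))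
        \<le> (\<Sum>\<alpha>\<in>A. \<Sum>h=1..n2. \<epsilon> * (sqrt CW * M * (1 + B)) * N\<^sup>2)"
      by (intro sum_mono termb) auto
    also have "\<dots> = real (card A) * real n2 * (\<epsilon> * (sqrt CW * M * (1 + B)) * N\<^sup>2)" by simp
    also have "N\<^sup>2 \<le> 4 * D * R1"
    proof -
      have cu: "(\<Sum>r=1..n0. \<bar>u r\<bar>)\<^sup>2 \<le> real n0 * (\<Sum>r=1..n0. (u r)\<^sup>2)"
        using sum_squared_le_sum_of_squares[of "\<lambda>r. \<bar>u r\<bar>" "{1..n0}"] by (simp add: mult.commute)
      have cv: "(\<Sum>h=1..n2. \<bar>v h\<bar>)\<^sup>2 \<le> real n2 * (\<Sum>h=1..n2. (v h)\<^sup>2)"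
        using sum_squared_le_sum_of_squares[of "\<lambda>r. \<bar>v r\<bar>" "{1..n2}"] by (simp add: mult.commute)
      have q: "(a + b + c + d)\<^sup>2 \<le> 4 * (a\<^sup>2 + b\<^sup>2 + c\<^sup>2 + d\<^sup>2)" for a b c d :: real
      proof -
        have "0 \<le> (a-b)\<^sup>2+(a-c)\<^sup>2+(a-d)\<^sup>2+(b-c)\<^sup>2+(b-d)\<^sup>2+(c-d)\<^sup>2" by simp
        then show ?thesis by (simp add: power2_eq_square algebra_simps)
      qed
      have u0: "(\<Sum>r=1..n0. (u r)\<^sup>2) \<ge> 0" "(\<Sum>h=1..n2. (v h)\<^sup>2) \<ge> 0" by (auto intro: sum_nonneg)
      have "N\<^sup>2 \<le> 4 * (1 + z\<^sup>2 + (\<Sum>r=1..n0. \<bar>u r\<bar>)\<^sup>2 + (\<Sum>h=1..n2. \<bar>v h\<bar>)\<^sup>2)"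
        unfolding N_def using q[of 1 "\<bar>z\<bar>"] by simp
      also have "\<dots> \<le> 4 * (1 + z\<^sup>2 + real n0 * (\<Sum>r=1..n0. (u r)\<^sup>2) + real n2 * (\<Sum>h=1..n2. (v h)\<^sup>2))"
        using cu cv by simp
      also have "\<dots> \<le> 4 * D * R1" unfolding D_def R1_def using u0
        by (simp add: algebra_simps)
      finally show ?thesis .
    qed
    then have "real (card A) * real n2 * (\<epsilon> * (sqrt CW * M * (1 + B)) * N\<^sup>2)
        \<le> real (card A) * real n2 * (\<epsilon> * (sqrt CW * M * (1 + B)) * (4 * D * R1))"
      using e0 assms(4,10) B0 by (intro mult_left_mono) auto
    also have "\<dots> = (\<epsilon> * K) * R1" unfolding K_def by (simp add: algebra_simps)
    also have "\<dots> \<le> R1 / 4"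
    proof -
      have "R1 \<ge> 0" unfolding R1_def by (auto intro!: add_nonneg_nonneg sum_nonneg)
      then show ?thesis using eK mult_right_mono[OF eK, of R1] by simp
    qed
    finally show ?thesis unfolding R1_def by simp
  qed
  define f1 where "f1 = (\<lambda>z::real. ennreal (exp (z\<^sup>2/4)))"
  define f2 where "f2 = (\<lambda>u::nat\<Rightarrow>real. \<Prod>r\<in>{1..n0}. ennreal (exp ((u r)\<^sup>2/4)))"
  define f3 where "f3 = (\<lambda>v::nat\<Rightarrow>real. \<Prod>h\<in>{1..n2}. ennreal (exp ((v h)\<^sup>2/4)))"
  have m1[measurable]: "f1 \<in> borel_measurable gauss" unfolding f1_def gauss_def by simp
  have comp: "(\<lambda>x. ennreal (exp ((x r)\<^sup>2/4))) \<in> borel_measurable (PiM I (\<lambda>_. gauss))" if "r \<in> I" for r and I :: "nat set"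
  proof -
    have "(\<lambda>x. x r) \<in> measurable (PiM I (\<lambda>_. gauss)) gauss"
      using measurable_component_singleton[OF that, of "\<lambda>_. gauss"] .
    then have c: "(\<lambda>x. x r) \<in> borel_measurable (PiM I (\<lambda>_. gauss))"
      by (simp add: measurable_cong_sets[OF refl, of gauss borel] gauss_def)
    show ?thesis by (rule measurable_compose[OF c]) simp
  qed
  have m2[measurable]: "f2 \<in> borel_measurable (PiM {1..n0} (\<lambda>_. gauss))" unfolding f2_def
    by (intro borel_measurable_prod_ennreal comp)
  have m3[measurable]: "f3 \<in> borel_measurable (PiM {1..n2} (\<lambda>_. gauss))" unfolding f3_def
    by (intro borel_measurable_prod_ennreal comp)
  have sfG: "sigma_finite_measure gauss" using gauss_prob by (rule prob_space_imp_sigma_finite)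
  have sfP: "sigma_finite_measure (PiM I (\<lambda>_. gauss))" if "finite I" for I :: "nat set"
  proof -
    have "prob_space (PiM I (\<lambda>_. gauss))" by (intro prob_space_PiM gauss_prob)
    then show ?thesis by (rule prob_space_imp_sigma_finite)
  qed
  have sfP2: "sigma_finite_measure (PiM {1..n0} (\<lambda>_. gauss) \<Otimes>\<^sub>M PiM {1..n2} (\<lambda>_. gauss))"
  proof -
    have "prob_space (PiM {1..n0} (\<lambda>_. gauss) \<Otimes>\<^sub>M PiM {1..n2} (\<lambda>_. gauss))"
      by (intro prob_space_pair prob_space_PiM gauss_prob)
    then show ?thesis by (rule prob_space_imp_sigma_finite)
  qed
  have I23: "(\<integral>\<^sup>+p. f2 (fst p) * f3 (snd p) \<partial>(PiM {1..n0} (\<lambda>_. gauss) \<Otimes>\<^sub>M PiM {1..n2} (\<lambda>_. gauss)))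
     = integral\<^sup>N (PiM {1..n0} (\<lambda>_. gauss)) f2 * integral\<^sup>N (PiM {1..n2} (\<lambda>_. gauss)) f3"
    by (rule nn_integral_pair_mult[OF sfP sfP m2 m3]) auto
  have m23[measurable]: "(\<lambda>p. f2 (fst p) * f3 (snd p)) \<in> borel_measurable (PiM {1..n0} (\<lambda>_. gauss) \<Otimes>\<^sub>M PiM {1..n2} (\<lambda>_. gauss))"
    by measurable
  have I123: "(\<integral>\<^sup>+\<omega>. f1 (fst \<omega>) * (f2 (fst (snd \<omega>)) * f3 (snd (snd \<omega>))) \<partial>shallow_space n0 n2)
     = integral\<^sup>N gauss f1 * (integral\<^sup>N (PiM {1..n0} (\<lambda>_. gauss)) f2 * integral\<^sup>N (PiM {1..n2} (\<lambda>_. gauss)) f3)"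
    unfolding shallow_space_def
    using nn_integral_pair_mult[OF sfG sfP2 m1 m23] I23 by simp
  have fin: "(\<integral>\<^sup>+\<omega>. ennreal (exp (1/4)) * (f1 (fst \<omega>) * (f2 (fst (snd \<omega>)) * f3 (snd (snd \<omega>)))) \<partial>shallow_space n0 n2) < \<infinity>"
  proof -
    have mm: "(\<lambda>\<omega>. f1 (fst \<omega>) * (f2 (fst (snd \<omega>)) * f3 (snd (snd \<omega>)))) \<in> borel_measurable (shallow_space n0 n2)"
      unfolding shallow_space_def by measurable
    have a: "integral\<^sup>N gauss f1 < \<infinity>" using gauss_exp_sq unfolding f1_def .
    have b: "integral\<^sup>N (PiM {1..n0} (\<lambda>_. gauss)) f2 < \<infinity>" unfolding f2_def by (rule PiM_gauss_exp) simp
    have c: "integral\<^sup>N (PiM {1..n2} (\<lambda>_. gauss)) f3 < \<infinity>" unfolding f3_def by (rule PiM_gauss_exp) simp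
    show ?thesis using a b c by (simp add: nn_integral_cmult[OF mm] I123 ennreal_mult_less_top)
  qed
  show ?thesis
  proof (intro exI[of _ \<epsilon>] conjI allI impI e0)
    fix \<theta> :: "'a \<Rightarrow> nat \<Rightarrow> real"
    assume th: "\<forall>\<alpha>\<in>A. \<forall>h\<in>{1..n2}. \<bar>\<theta> \<alpha> h\<bar> < \<epsilon>"
    have "(\<integral>\<^sup>+ \<omega>. ennreal (exp (\<Sum>\<alpha>\<in>A. \<Sum>h=1..n2.
               \<theta> \<alpha> h * shallow_F n0 Cb CW \<sigma> \<sigma>' s h (x \<alpha>) \<omega>)) \<partial>shallow_space n0 n2)
        \<le> (\<integral>\<^sup>+\<omega>. ennreal (exp (1/4)) * (f1 (fst \<omega>) * (f2 (fst (snd \<omega>)) * f3 (snd (snd \<omega>)))) \<partial>shallow_space n0 n2)"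
    proof (intro nn_integral_mono)
      fix \<omega> :: "real \<times> (nat \<Rightarrow> real) \<times> (nat \<Rightarrow> real)"
      obtain z u v where w: "\<omega> = (z, u, v)" by (cases \<omega>) auto
      have "exp ((1 + z\<^sup>2 + (\<Sum>r=1..n0. (u r)\<^sup>2) + (\<Sum>h=1..n2. (v h)\<^sup>2)) / 4)
          = exp (1/4) * (exp (z\<^sup>2/4) * ((\<Prod>r\<in>{1..n0}. exp ((u r)\<^sup>2/4)) * (\<Prod>h\<in>{1..n2}. exp ((v h)\<^sup>2/4))))"
        by (simp add: add_divide_distrib sum_divide_distrib exp_add exp_sum)
      also have "ennreal \<dots> = ennreal (exp (1/4)) * (f1 z * (f2 u * f3 v))"
        unfolding f1_def f2_def f3_def
        by (simp add: ennreal_mult prod_ennreal prod_nonneg)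
      finally have eq: "ennreal (exp ((1 + z\<^sup>2 + (\<Sum>r=1..n0. (u r)\<^sup>2) + (\<Sum>h=1..n2. (v h)\<^sup>2)) / 4))
          = ennreal (exp (1/4)) * (f1 z * (f2 u * f3 v))" .
      show "ennreal (exp (\<Sum>\<alpha>\<in>A. \<Sum>h=1..n2. \<theta> \<alpha> h * shallow_F n0 Cb CW \<sigma> \<sigma>' s h (x \<alpha>) \<omega>))
          \<le> ennreal (exp (1/4)) * (f1 (fst \<omega>) * (f2 (fst (snd \<omega>)) * f3 (snd (snd \<omega>))))"
        unfolding w using pw[OF th, of z u v] eq[symmetric] by (simp add: ennreal_leI)
    qed
    also note fin
    finally show "(\<integral>\<^sup>+ \<omega>. ennreal (exp (\<Sum>\<alpha>\<in>A. \<Sum>h=1..n2.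
               \<theta> \<alpha> h * shallow_F n0 Cb CW \<sigma> \<sigma>' s h (x \<alpha>) \<omega>)) \<partial>shallow_space n0 n2) < \<infinity>" .
  qed
qed

end
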